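(* For any finite alphabet $\mathfrak{G}$ and any $\mathfrak{G}$-trees $\mathfrak{s}$, $\mathfrak{t}$, $\mathfrak{s}'$, $\mathfrak{t}'$ such that $\mathfrak{s} \preceq \mathfrak{t}$ and $\mathfrak{s}' \preceq \mathfrak{t}'$, the intervals $[\mathfrak{s},\mathfrak{t}]$ and $[\mathfrak{s}',\mathfrak{t}']$ of the $\mathfrak{G}$-prefix poset are isomorphic as posets if and only if $\mathrm{sh}(\lozenge_{|\mathfrak{s}|}[\mathfrak{t}\setminus\mathfrak{s}]) = \mathrm{sh}(\lozenge_{|\mathfrak{s}'|}[\mathfrak{t}'\setminus\mathfrak{s}'])$.
   Context: $\mathfrak{G}$ is a finite alphabet (letters with arities $\geq 1$). A $\mathfrak{G}$-tree is either the leaf (the tree with no internal node) or $\mathtt{a}[\mathfrak{s}_1,\dots,\mathfrak{s}_{|\mathtt{a}|}]$ with root decorated by $\mathtt{a}\in\mathfrak{G}$; $|\mathfrak{t}|$ denotes the number of leaves, ordered left to right, and $\mathfrak{t}\circ[\mathfrak{r}_1,\dots,\mathfrak{r}_{|\mathfrak{t}|}]$ is obtained by grafting the root of each $\mathfrak{r}_i$ onto the $i$-th leaf of $\mathfrak{t}$. The $\mathfrak{G}$-prefix poset is the set of $\mathfrak{G}$-trees ordered by $\mathfrak{s}\preceq\mathfrak{t}$ iff $\mathfrak{s}$ is a prefix of $\mathfrak{t}$, i.e. $\mathfrak{t}=\mathfrak{s}\circ[\mathfrak{r}_1,\dots,\mathfrak{r}_{|\mathfrak{s}|}]$ for some $\mathfrak{G}$-trees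 $\mathfrak{r}_i$ (equivalently, $\mathfrak{t}$ is obtained from $\mathfrak{s}$ by successively replacing leaves by internal nodes decorated by letters). In this case the difference $\mathfrak{t}\setminus\mathfrak{s}$ is the (unique) forest $(\mathfrak{r}_1,\dots,\mathfrak{r}_{|\mathfrak{s}|})$, and $\lozenge_k[\mathfrak{r}_1,\dots,\mathfrak{r}_k]$ is the tree obtained by grafting $\mathfrak{r}_1,\dots,\mathfrak{r}_k$ onto a root decorated by a new letter $\lozenge_k$ of arity $k$. A shadow is a finite (possibly empty) multiset of shadows (a nonplanar undecorated rooted tree). For a $\mathfrak{G}$-tree $\mathfrak{t}$ different from the leaf with root of arity $k$, $\mathrm{sh}(\mathfrak{t})$ is the multiset of the $\mathrm{sh}(\mathfrak{t}(i))$ for those $i\in[k]$ such that the $i$-th subtree $\mathfrak{t}(i)$ of the root is not the leaf. *)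

theory Defs
  imports Main "HOL-Library.Multiset"
begin

text \<open>Planar trees whose internal nodes are decorated by letters; the children list of a
node is ordered left to right.  The leaf is the tree with no internal node.\<close>
datatype 'a gtree = Leaf | Node 'a "'a gtree list"

definition alphabet :: "'a set \<Rightarrow> ('a \<Rightarrow> nat) \<Rightarrow> bool" where
  "alphabet G ar \<longleftrightarrow> finite G \<and> (\<forall>a\<in>G. ar a \<ge> 1)"

fun gtree_wf :: "'a set \<Rightarrow> ('a \<Rightarrow> nat) \<Rightarrow> 'a gtree \<Rightarrow> bool" where
  "gtree_wf G ar Leaf = True"
| "gtree_wf G ar (Node a ts) = (a \<in> G \<and> length ts = ar a \<and> (\<forall>t\<in>set ts. gtree_wf G ar t))"

fun nleaves :: "'a gtree \<Rightarrow> nat" where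
  "nleaves Leaf = 1"
| "nleaves (Node a ts) = sum_list (map nleaves ts)"

fun chunks :: "nat list \<Rightarrow> 'b list \<Rightarrow> 'b list list" where
  "chunks [] xs = []"
| "chunks (n # ns) xs = take n xs # chunks ns (drop n xs)"

lemma length_chunks [simp]: "length (chunks ns xs) = length ns"
  by (induction ns arbitrary: xs) auto

text \<open>Grafting: graft t [r_1,...,r_n] grafts the root of r_i onto the i-th leaf of t
(meaningful when n = nleaves t).\<close>
function graft :: "'a gtree \<Rightarrow> 'a gtree list \<Rightarrow> 'a gtree" where
  "graft Leaf rs = hd rs"
| "graft (Node a ts) rs =
     Node a (map (\<lambda>i. graft (ts ! i) (chunks (map nleaves ts) rs ! i)) [0..<length ts])"
  by pat_completeness auto
termination
  by (relation "measure (size \<circ> fst)")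
     (auto simp: size_list_estimation' intro: size_list_estimation' [OF nth_mem] less_le_trans
           dest!: nth_mem)

definition gprefix :: "'a set \<Rightarrow> ('a \<Rightarrow> nat) \<Rightarrow> 'a gtree \<Rightarrow> 'a gtree \<Rightarrow> bool" where
  "gprefix G ar s t \<longleftrightarrow>
     (\<exists>rs. length rs = nleaves s \<and> (\<forall>r\<in>set rs. gtree_wf G ar r) \<and> t = graft s rs)"

text \<open>The difference t \ s: the unique forest (r_1,...,r_|s|) with t = s o [r_1,...,r_|s|].\<close>
definition tdiff :: "'a set \<Rightarrow> ('a \<Rightarrow> nat) \<Rightarrow> 'a gtree \<Rightarrow> 'a gtree \<Rightarrow> 'a gtree list" where
  "tdiff G ar t s =
     (THE rs. length rs = nleaves s \<and> (\<forall>r\<in>set rs. gtree_wf G ar r) \<and> t = graft s rs)"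

definition ginterval :: "'a set \<Rightarrow> ('a \<Rightarrow> nat) \<Rightarrow> 'a gtree \<Rightarrow> 'a gtree \<Rightarrow> 'a gtree set" where
  "ginterval G ar s t = {u. gtree_wf G ar u \<and> gprefix G ar s u \<and> gprefix G ar u t}"

definition interval_iso :: "'a set \<Rightarrow> ('a \<Rightarrow> nat) \<Rightarrow> 'a gtree set \<Rightarrow> 'a gtree set \<Rightarrow> bool" where
  "interval_iso G ar I J \<longleftrightarrow>
     (\<exists>f. bij_betw f I J \<and> (\<forall>x\<in>I. \<forall>y\<in>I. gprefix G ar x y \<longleftrightarrow> gprefix G ar (f x) (f y)))"

text \<open>Shadows: finite multisets of shadows (nonplanar undecorated rooted trees).\<close>
datatype shadow = Sh "shadow multiset"

text \<open>sh(t) for a non-leaf tree t: multiset of the shadows of the non-leaf root subtrees.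
(The value at the leaf is irrelevant; it is never used below.)\<close>
fun sh :: "'a gtree \<Rightarrow> shadow" where
  "sh Leaf = Sh {#}"
| "sh (Node a ts) = Sh (mset (map sh (filter (\<lambda>t. t \<noteq> Leaf) ts)))"

text \<open>sh(\<lozenge>_k[r_1,...,r_k]): the shadow of the tree with a fresh root of arity k and
subtrees r_1..r_k.  Since sh ignores decorations, this is the multiset of sh(r_i) over the
non-leaf r_i.\<close>
definition sh_diamond :: "'a gtree list \<Rightarrow> shadow" where
  "sh_diamond rs = Sh (mset (map sh (filter (\<lambda>t. t \<noteq> Leaf) rs)))"

end

theory Submission
  imports Defs "HOL-Library.Sublist" "HOL-Combinatorics.Permutations"
begin

function pre :: "'a gtree \<Rightarrow> 'a gtree \<Rightarrow> bool" where
  "pre Leaf v = True"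
| "pre (Node a us) Leaf = False"
| "pre (Node a us) (Node b vs) = (a = b \<and> length us = length vs \<and> (\<forall>i<length us. pre (us!i) (vs!i)))"
  by pat_completeness auto
termination
  by (relation "measure (size \<circ> fst)")
     (auto simp: size_list_estimation' intro: size_list_estimation' [OF nth_mem] less_le_trans
           dest!: nth_mem)

function diff :: "'a gtree \<Rightarrow> 'a gtree \<Rightarrow> 'a gtree list" where
  "diff Leaf v = [v]"
| "diff (Node a us) Leaf = []"
| "diff (Node a us) (Node b vs) = concat (map (\<lambda>i. diff (us!i) (vs!i)) [0..<length us])"
  by pat_completeness auto
termination
  by (relation "measure (size \<circ> fst)")
     (auto simp: size_list_estimation' intro: size_list_estimation' [OF nth_mem] less_le_trans
           dest!: nth_mem)

definition F :: "nat list set list \<Rightarrow> nat list set" where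
  "F Ps = (\<Union>i<length Ps. (Cons i) ` (Ps!i))"

fun X :: "'a gtree \<Rightarrow> nat list set" where
  "X Leaf = {}"
| "X (Node a ts) = insert [] (F (map X ts))"

function restr :: "'a gtree \<Rightarrow> nat list set \<Rightarrow> 'a gtree" where
  "restr Leaf D = Leaf"
| "restr (Node a ts) D = (if [] \<in> D then Node a (map (\<lambda>i. restr (ts!i) {p. i#p \<in> D}) [0..<length ts]) else Leaf)"
  by pat_completeness auto
termination
  by (relation "measure (size \<circ> fst)")
     (auto simp: size_list_estimation' intro: size_list_estimation' [OF nth_mem] less_le_trans
           dest!: nth_mem)

lemma F_mem: "p \<in> F Ps \<longleftrightarrow> (\<exists>i q. p = i # q \<and> i < length Ps \<and> q \<in> Ps!i)"
  unfolding F_def by auto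

lemma Cons_in_F[simp]: "i # q \<in> F Ps \<longleftrightarrow> i < length Ps \<and> q \<in> Ps!i"
  unfolding F_def by auto

lemma Nil_notin_F[simp]: "[] \<notin> F Ps"
  unfolding F_def by auto

lemma finite_F: "(\<And>P. P \<in> set Ps \<Longrightarrow> finite P) \<Longrightarrow> finite (F Ps)"
  unfolding F_def by auto

lemma finite_X: "finite (X t)"
  by (induction t) (auto intro!: finite_F)

lemma X_closed: "p \<in> X t \<Longrightarrow> prefix q p \<Longrightarrow> q \<in> X t"
proof (induction t arbitrary: p q)
  case Leaf then show ?case by simp
next
  case (Node a ts)
  show ?case
  proof (cases q)
    case Nil then show ?thesis by simp
  next
    case (Cons j q')
    with Node.prems obtain p' where p: "p = j # p'" "prefix q' p'"
      by (cases p) auto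
    with Node.prems have "j < length ts" "p' \<in> X (ts!j)" by auto
    with Node.IH[of "ts!j" p' q'] p show ?thesis using Cons by auto
  qed
qed

lemma pre_refl: "pre t t"
  by (induction t) auto

lemma pre_X: "pre u v \<Longrightarrow> X u \<subseteq> X v"
proof (induction u v rule: pre.induct)
  case (3 a us b vs)
  then show ?case by (fastforce simp: F_mem)
qed auto

lemma F_subset:
  assumes "length Ps = length Qs"
  shows "F Ps \<subseteq> F Qs \<longleftrightarrow> (\<forall>i<length Ps. Ps!i \<subseteq> Qs!i)"
proof
  assume h: "F Ps \<subseteq> F Qs"
  show "\<forall>i<length Ps. Ps!i \<subseteq> Qs!i"
  proof (intro allI impI subsetI)
    fix i x assume "i < length Ps" "x \<in> Ps!i"
    then have "i # x \<in> F Ps" by simp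
    then have "i # x \<in> F Qs" using h by blast
    then show "x \<in> Qs!i" by simp
  qed
next
  assume h: "\<forall>i<length Ps. Ps!i \<subseteq> Qs!i"
  show "F Ps \<subseteq> F Qs"
  proof
    fix p assume "p \<in> F Ps"
    then obtain i q where "p = i # q" "i < length Ps" "q \<in> Ps!i" by (auto simp: F_mem)
    then show "p \<in> F Qs" using h assms by auto
  qed
qed

lemma X_Node_subset: "length us = length vs \<Longrightarrow>
   X (Node a us) \<subseteq> X (Node b vs) \<longleftrightarrow> (\<forall>i<length us. X (us!i) \<subseteq> X (vs!i))"
proof -
  assume l: "length us = length vs"
  have "X (Node a us) \<subseteq> X (Node b vs) \<longleftrightarrow> F (map X us) \<subseteq> F (map X vs)"
    by auto
  also have "\<dots> \<longleftrightarrow> (\<forall>i<length us. X (us!i) \<subseteq> X (vs!i))"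
    using F_subset[of "map X us" "map X vs"] l by auto
  finally show ?thesis .
qed

lemma X_eq_Leaf: "X t = {} \<longleftrightarrow> t = Leaf"
  by (cases t) auto

lemma pre_iff_X: "pre u t \<Longrightarrow> pre v t \<Longrightarrow> pre u v \<longleftrightarrow> X u \<subseteq> X v"
proof (induction u arbitrary: v t)
  case Leaf then show ?case by simp
next
  case (Node a us)
  from Node.prems obtain ts where t: "t = Node a ts" "length us = length ts" "\<forall>i<length us. pre (us!i) (ts!i)"
    by (cases t) auto
  show ?case
  proof (cases v)
    case Leaf then show ?thesis by simp
  next
    case (Node b vs)
    with Node.prems t have v: "b = a" "length vs = length ts" "\<forall>i<length vs. pre (vs!i) (ts!i)" by auto
    have "X (Node a us) \<subseteq> X (Node a vs) \<longleftrightarrow> (\<forall>i<length us. X (us!i) \<subseteq> X (vs!i))"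
      by (rule X_Node_subset) (use t v in simp)
    moreover have "\<forall>i<length us. pre (us!i) (vs!i) \<longleftrightarrow> X (us!i) \<subseteq> X (vs!i)"
    proof (intro allI impI)
      fix i assume i: "i < length us"
      show "pre (us!i) (vs!i) \<longleftrightarrow> X (us!i) \<subseteq> X (vs!i)"
        by (rule Node.IH[of "us!i" "ts!i" "vs!i"]) (use i t v in auto)
    qed
    ultimately show ?thesis using t v \<open>v = _\<close> by simp
  qed
qed

lemma X_inj: "pre u t \<Longrightarrow> pre v t \<Longrightarrow> X u = X v \<Longrightarrow> u = v"
proof (induction u arbitrary: v t)
  case Leaf then show ?case by (metis X.simps(1) X_eq_Leaf)
next
  case (Node a us)
  from Node.prems obtain ts where t: "t = Node a ts" "length us = length ts" "\<forall>i<length us. pre (us!i) (ts!i)"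
    by (cases t) auto
  show ?case
  proof (cases v)
    case Leaf then show ?thesis using Node.prems by simp
  next
    case (Node b vs)
    with Node.prems t have v: "b = a" "length vs = length ts" "\<forall>i<length vs. pre (vs!i) (ts!i)" by auto
    have e: "X (Node a us) = X (Node b vs)" using Node.prems(3) \<open>v = _\<close> by simp
    have l: "length us = length vs" using t v by simp
    have "\<forall>i<length us. X (us!i) \<subseteq> X (vs!i)"
      using X_Node_subset[OF l, of a b] e by (simp del: X.simps)
    moreover have "\<forall>i<length vs. X (vs!i) \<subseteq> X (us!i)"
      using X_Node_subset[OF l[symmetric], of b a] e by (simp del: X.simps)
    ultimately have "\<forall>i<length us. X (us!i) = X (vs!i)" using l by auto
    then have "\<forall>i<length us. us!i = vs!i"
    proof (intro allI impI)
      fix i assume i: "i < length us" and h: "\<forall>i<length us. X (us!i) = X (vs!i)"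
      show "us!i = vs!i"
        by (rule Node.IH[of "us!i" "ts!i" "vs!i"]) (use i t v h in auto)
    qed
    then show ?thesis using t v \<open>v = _\<close> by (simp add: list_eq_iff_nth_eq)
  qed
qed

lemma restr_wf: "gtree_wf G ar t \<Longrightarrow> gtree_wf G ar (restr t D)"
proof (induction t arbitrary: D)
  case (Node a ts)
  have "gtree_wf G ar (restr (ts ! i) {p. i # p \<in> D})" if "i < length ts" for i
    using Node that by simp
  then show ?case using Node.prems by (auto simp: in_set_conv_nth)
qed simp

lemma restr_pre: "pre (restr t D) t"
proof (induction t arbitrary: D)
  case (Node a ts)
  then show ?case by auto
qed simp

lemma restr_X: "(\<forall>p\<in>D. \<forall>q\<in>X t. prefix q p \<longrightarrow> q \<in> D) \<Longrightarrow> X (restr t D) = D \<inter> X t"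
proof (induction t arbitrary: D)
  case Leaf then show ?case by simp
next
  case (Node a ts)
  show ?case
  proof (cases "[] \<in> D")
    case False
    have "D \<inter> X (Node a ts) = {}"
      using Node.prems False by fastforce
    then show ?thesis using False by simp
  next
    case True
    have IH: "X (restr (ts!i) {p. i#p \<in> D}) = {p. i#p \<in> D} \<inter> X (ts!i)" if "i < length ts" for i
    proof (rule Node.IH)
      show "ts!i \<in> set ts" using that by simp
      show "\<forall>p\<in>{p. i # p \<in> D}. \<forall>q\<in>X (ts ! i). prefix q p \<longrightarrow> q \<in> {p. i # p \<in> D}"
        using Node.prems that by fastforce
    qed
    show ?thesis
    proof (rule set_eqI)
      fix p show "p \<in> X (restr (Node a ts) D) \<longleftrightarrow> p \<in> D \<inter> X (Node a ts)"
        using True IH by (cases p) auto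
    qed
  qed
qed


lemma map_upt_nth: "map (\<lambda>i. f (xs!i)) [0..<length xs] = map f xs"
proof -
  have "map (\<lambda>i. f (xs!i)) [0..<length xs] = map f (map (\<lambda>i. xs!i) [0..<length xs])" by simp
  also have "\<dots> = map f xs" by (simp only: map_nth)
  finally show ?thesis .
qed

lemma chunks_len: "sum_list ns \<le> length xs \<Longrightarrow> i < length ns \<Longrightarrow> length (chunks ns xs ! i) = ns!i"
proof (induction ns arbitrary: xs i)
  case (Cons n ns)
  then show ?case by (cases i) auto
qed simp

lemma chunks_concat: "sum_list ns = length xs \<Longrightarrow> concat (chunks ns xs) = xs"
  by (induction ns arbitrary: xs) auto

lemma chunks_of_concat: "chunks (map length xss) (concat xss) = xss"
  by (induction xss) auto

lemma chunks_set: "x \<in> set (chunks ns xs ! i) \<Longrightarrow> i < length ns \<Longrightarrow> x \<in> set xs"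
proof (induction ns arbitrary: xs i)
  case (Cons n ns)
  then show ?case by (cases i) (auto dest: in_set_takeD in_set_dropD)
qed simp

lemma graft_wf_pre:
  "gtree_wf G ar u \<Longrightarrow> length rs = nleaves u \<Longrightarrow> \<forall>r\<in>set rs. gtree_wf G ar r \<Longrightarrow>
   gtree_wf G ar (graft u rs) \<and> pre u (graft u rs)"
proof (induction u arbitrary: rs)
  case Leaf
  then show ?case by (cases rs) auto
next
  case (Node a ts)
  let ?c = "chunks (map nleaves ts) rs"
  have IH: "gtree_wf G ar (graft (ts!i) (?c!i)) \<and> pre (ts!i) (graft (ts!i) (?c!i))"
    if i: "i < length ts" for i
  proof (rule Node.IH)
    show "ts!i \<in> set ts" using i by simp
    show "gtree_wf G ar (ts!i)" using Node.prems i by simp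
    show "length (?c!i) = nleaves (ts!i)"
      using chunks_len[of "map nleaves ts" rs i] Node.prems i by simp
    show "\<forall>r\<in>set (?c!i). gtree_wf G ar r"
      using chunks_set[of _ "map nleaves ts" rs i] Node.prems i by auto
  qed
  show ?case using Node.prems IH by (auto simp: in_set_conv_nth)
qed

lemma diff_len: "pre u v \<Longrightarrow> length (diff u v) = nleaves u"
proof (induction u arbitrary: v)
  case Leaf then show ?case by simp
next
  case (Node a us)
  then obtain vs where v: "v = Node a vs" "length us = length vs" "\<forall>i<length us. pre (us!i) (vs!i)"
    by (cases v) auto
  have "map (\<lambda>i. length (diff (us!i) (vs!i))) [0..<length us] = map (\<lambda>i. nleaves (us!i)) [0..<length us]"
    using Node.IH v by (auto intro!: map_cong)
  also have "\<dots> = map nleaves us" by (rule map_upt_nth)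
  finally show ?case using v by (simp add: length_concat comp_def)
qed


lemma graft_diff: "pre u v \<Longrightarrow> graft u (diff u v) = v"
proof (induction u arbitrary: v)
  case Leaf then show ?case by simp
next
  case (Node a us)
  then obtain vs where v: "v = Node a vs" "length us = length vs" "\<forall>i<length us. pre (us!i) (vs!i)"
    by (cases v) auto
  let ?xss = "map (\<lambda>i. diff (us!i) (vs!i)) [0..<length us]"
  have ml: "map length ?xss = map nleaves us"
  proof -
    have dl: "length (diff (us!i) (vs!i)) = nleaves (us!i)" if "i < length us" for i
      by (intro diff_len) (use v that in auto)
    have "map length ?xss = map (\<lambda>i. nleaves (us!i)) [0..<length us]"
      using dl by simp
    also have "\<dots> = map nleaves us" by (rule map_upt_nth)
    finally show ?thesis .
  qed
  have ch: "chunks (map nleaves us) (concat ?xss) = ?xss"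
    using chunks_of_concat[of ?xss] ml by simp
  have g: "graft (us!i) (?xss!i) = vs!i" if "i < length us" for i
    using Node.IH[of "us!i" "vs!i"] v that by simp
  have m: "map (\<lambda>i. graft (us!i) (?xss ! i)) [0..<length us] = vs"
  proof (rule nth_equalityI)
    show "length (map (\<lambda>i. graft (us!i) (?xss ! i)) [0..<length us]) = length vs" using v by simp
    fix i assume "i < length (map (\<lambda>i. graft (us!i) (?xss ! i)) [0..<length us])"
    then have i: "i < length us" by simp
    then show "map (\<lambda>i. graft (us!i) (?xss ! i)) [0..<length us] ! i = vs ! i"
      using g[OF i] by (simp del: nth_map_upt diff.simps add: nth_map_upt[of i "length us" 0])
  qed
  have d: "diff (Node a us) v = concat ?xss" using v by simp
  have "graft (Node a us) (concat ?xss) = Node a (map (\<lambda>i. graft (us!i) (chunks (map nleaves us) (concat ?xss) ! i)) [0..<length us])"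
    by (rule graft.simps(2))
  also have "\<dots> = Node a vs" unfolding ch m ..
  finally show ?case using d v by simp
qed

lemma diff_wf: "pre u v \<Longrightarrow> gtree_wf G ar v \<Longrightarrow> r \<in> set (diff u v) \<Longrightarrow> gtree_wf G ar r"
proof (induction u arbitrary: v)
  case Leaf then show ?case by simp
next
  case (Node a us)
  then obtain vs where v: "v = Node a vs" "length us = length vs" "\<forall>i<length us. pre (us!i) (vs!i)"
    by (cases v) auto
  from Node.prems(3) v obtain i where i: "i < length us" "r \<in> set (diff (us!i) (vs!i))"
    by auto
  show ?case
    by (rule Node.IH[of "us!i" "vs!i"]) (use i v Node.prems(2) in auto)
qed

lemma diff_graft: "length rs = nleaves u \<Longrightarrow> diff u (graft u rs) = rs"
proof (induction u arbitrary: rs)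
  case Leaf
  then show ?case by (cases rs) auto
next
  case (Node a ts)
  let ?c = "chunks (map nleaves ts) rs"
  have IH: "diff (ts!i) (graft (ts!i) (?c!i)) = ?c!i" if i: "i < length ts" for i
  proof (rule Node.IH)
    show "ts!i \<in> set ts" using i by simp
    show "length (?c!i) = nleaves (ts!i)"
      using chunks_len[of "map nleaves ts" rs i] Node.prems i by simp
  qed
  let ?g = "map (\<lambda>i. graft (ts!i) (?c!i)) [0..<length ts]"
  have e0: "graft (Node a ts) rs = Node a ?g" by (rule graft.simps(2))
  have e1: "diff (Node a ts) (Node a ?g) = concat (map (\<lambda>i. diff (ts!i) (?g!i)) [0..<length ts])"
    by (rule diff.simps(3))
  have e2: "map (\<lambda>i. diff (ts!i) (?g!i)) [0..<length ts] = ?c"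
  proof (rule nth_equalityI)
    show "length (map (\<lambda>i. diff (ts!i) (?g!i)) [0..<length ts]) = length ?c" by simp
    fix i assume "i < length (map (\<lambda>i. diff (ts!i) (?g!i)) [0..<length ts])"
    then have i: "i < length ts" by simp
    have "?g ! i = graft (ts!i) (?c!i)" using i by (simp del: graft.simps)
    then show "map (\<lambda>i. diff (ts!i) (?g!i)) [0..<length ts] ! i = ?c ! i"
      using IH[OF i] i by (simp del: graft.simps diff.simps)
  qed
  have "diff (Node a ts) (graft (Node a ts) rs) = concat ?c"
    unfolding e0 e1 e2 ..
  also have "concat ?c = rs"
    using chunks_concat[of "map nleaves ts" rs] Node.prems by simp
  finally show ?case .
qed

lemma gprefix_iff: "gtree_wf G ar u \<Longrightarrow> gprefix G ar u v \<longleftrightarrow> gtree_wf G ar v \<and> pre u v"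
proof
  assume "gtree_wf G ar u" "gprefix G ar u v"
  then show "gtree_wf G ar v \<and> pre u v"
    unfolding gprefix_def using graft_wf_pre by blast
next
  assume "gtree_wf G ar v \<and> pre u v"
  then show "gprefix G ar u v"
    unfolding gprefix_def
    by (intro exI[of _ "diff u v"]) (auto simp: diff_len graft_diff intro: diff_wf)
qed

lemma tdiff_eq: "pre s t \<Longrightarrow> gtree_wf G ar t \<Longrightarrow> tdiff G ar t s = diff s t"
  unfolding tdiff_def
proof (rule the_equality)
  assume "pre s t" "gtree_wf G ar t"
  then show "length (diff s t) = nleaves s \<and> (\<forall>r\<in>set (diff s t). gtree_wf G ar r) \<and> t = graft s (diff s t)"
    by (auto simp: diff_len graft_diff intro: diff_wf)
next
  fix rs assume "length rs = nleaves s \<and> (\<forall>r\<in>set rs. gtree_wf G ar r) \<and> t = graft s rs"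
  then show "rs = diff s t" using diff_graft by metis
qed


definition piso :: "nat list set \<Rightarrow> nat list set \<Rightarrow> bool" where
  "piso A B \<longleftrightarrow> (\<exists>f. bij_betw f A B \<and> (\<forall>x\<in>A. \<forall>y\<in>A. prefix x y \<longleftrightarrow> prefix (f x) (f y)))"

lemma piso_refl: "piso A A"
  unfolding piso_def by (intro exI[of _ id]) auto

lemma piso_sym: assumes "piso A B" shows "piso B A"
proof -
  from assms obtain f where f: "bij_betw f A B" "\<forall>x\<in>A. \<forall>y\<in>A. prefix x y \<longleftrightarrow> prefix (f x) (f y)"
    unfolding piso_def by blast
  let ?g = "inv_into A f"
  have g: "bij_betw ?g B A" using f(1) by (rule bij_betw_inv_into)
  have "\<forall>x\<in>B. \<forall>y\<in>B. prefix x y \<longleftrightarrow> prefix (?g x) (?g y)"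
  proof (intro ballI)
    fix x y assume "x \<in> B" "y \<in> B"
    then have "?g x \<in> A" "?g y \<in> A" "f (?g x) = x" "f (?g y) = y"
      using f(1) g by (auto simp: bij_betw_def f_inv_into_f inv_into_into)
    then show "prefix x y \<longleftrightarrow> prefix (?g x) (?g y)" using f(2) by metis
  qed
  then show ?thesis unfolding piso_def using g by blast
qed

lemma piso_trans: assumes "piso A B" "piso B C" shows "piso A C"
proof -
  from assms obtain f g where f: "bij_betw f A B" "\<forall>x\<in>A. \<forall>y\<in>A. prefix x y \<longleftrightarrow> prefix (f x) (f y)"
    and g: "bij_betw g B C" "\<forall>x\<in>B. \<forall>y\<in>B. prefix x y \<longleftrightarrow> prefix (g x) (g y)"
    unfolding piso_def by blast
  have "bij_betw (g \<circ> f) A C" using f(1) g(1) by (rule bij_betw_trans)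
  moreover have "\<forall>x\<in>A. \<forall>y\<in>A. prefix x y \<longleftrightarrow> prefix ((g \<circ> f) x) ((g \<circ> f) y)"
    using f g bij_betwE[OF f(1)] by auto
  ultimately show ?thesis unfolding piso_def by blast
qed

declare piso_trans[trans]

lemma piso_image: "inj_on f A \<Longrightarrow> (\<forall>x\<in>A. \<forall>y\<in>A. prefix x y \<longleftrightarrow> prefix (f x) (f y)) \<Longrightarrow> piso A (f ` A)"
  unfolding piso_def bij_betw_def by blast

lemma piso_Cons: "piso A (Cons i ` A)"
  by (rule piso_image) (auto simp: inj_on_def)

definition shn :: "nat \<Rightarrow> nat list \<Rightarrow> nat list" where
  "shn n p = (case p of [] \<Rightarrow> [] | i # q \<Rightarrow> (i + n) # q)"

lemma shn_Cons[simp]: "shn n (i # q) = (i + n) # q"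
  by (simp add: shn_def)

lemma piso_shn: assumes "[] \<notin> A" shows "piso A (shn n ` A)"
proof (rule piso_image)
  show "inj_on (shn n) A"
  proof
    fix x y assume "x \<in> A" "y \<in> A" "shn n x = shn n y"
    then show "x = y" using assms by (cases x; cases y) auto
  qed
  show "\<forall>x\<in>A. \<forall>y\<in>A. prefix x y \<longleftrightarrow> prefix (shn n x) (shn n y)"
  proof (intro ballI)
    fix x y assume "x \<in> A" "y \<in> A"
    then show "prefix x y \<longleftrightarrow> prefix (shn n x) (shn n y)" using assms by (cases x; cases y) auto
  qed
qed

definition sep :: "nat list set \<Rightarrow> nat list set \<Rightarrow> bool" where
  "sep A B \<longleftrightarrow> (\<forall>x\<in>A. \<forall>y\<in>B. \<not> prefix x y \<and> \<not> prefix y x)"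

lemma piso_union:
  assumes "piso A1 B1" "piso A2 B2" "sep A1 A2" "sep B1 B2"
  shows "piso (A1 \<union> A2) (B1 \<union> B2)"
proof -
  from assms obtain f1 f2 where f1: "bij_betw f1 A1 B1" "\<forall>x\<in>A1. \<forall>y\<in>A1. prefix x y \<longleftrightarrow> prefix (f1 x) (f1 y)"
    and f2: "bij_betw f2 A2 B2" "\<forall>x\<in>A2. \<forall>y\<in>A2. prefix x y \<longleftrightarrow> prefix (f2 x) (f2 y)"
    unfolding piso_def by blast
  have d1: "A1 \<inter> A2 = {}" using assms(3) unfolding sep_def by blast
  have d2: "B1 \<inter> B2 = {}" using assms(4) unfolding sep_def by blast
  let ?f = "\<lambda>x. if x \<in> A1 then f1 x else f2 x"
  have "bij_betw ?f (A1 \<union> A2) (B1 \<union> B2)"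
    by (rule bij_betw_disjoint_Un[OF f1(1) f2(1) d1 d2])
  moreover have "\<forall>x\<in>A1 \<union> A2. \<forall>y\<in>A1 \<union> A2. prefix x y \<longleftrightarrow> prefix (?f x) (?f y)"
  proof (intro ballI)
    fix x y assume x: "x \<in> A1 \<union> A2" and y: "y \<in> A1 \<union> A2"
    have i1: "f1 z \<in> B1" if "z \<in> A1" for z using f1(1) that by (auto simp: bij_betw_def)
    have i2: "f2 z \<in> B2" if "z \<in> A2" for z using f2(1) that by (auto simp: bij_betw_def)
    show "prefix x y \<longleftrightarrow> prefix (?f x) (?f y)"
      using x y f1(2) f2(2) d1 i1 i2 assms(3,4) unfolding sep_def by (auto; metis)
  qed
  ultimately show ?thesis unfolding piso_def by blast
qed

lemma F_Nil[simp]: "F [] = {}"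
  by (simp add: F_def)

lemma F_Cons: "F (P # Ps) = Cons 0 ` P \<union> shn 1 ` F Ps"
proof (rule set_eqI)
  fix p show "p \<in> F (P # Ps) \<longleftrightarrow> p \<in> Cons 0 ` P \<union> shn 1 ` F Ps"
  proof (cases p)
    case Nil then show ?thesis by (auto simp: shn_def split: list.splits)
  next
    case (Cons i q)
    show ?thesis
    proof (cases i)
      case 0 then show ?thesis using Cons by (auto simp: shn_def split: list.splits)
    next
      case (Suc j)
      have "p \<in> shn 1 ` F Ps \<longleftrightarrow> j # q \<in> F Ps"
      proof
        assume "p \<in> shn 1 ` F Ps"
        then obtain r where "r \<in> F Ps" "p = shn 1 r" by blast
        then show "j # q \<in> F Ps" using Cons Suc by (cases r) auto
      next
        assume "j # q \<in> F Ps" then show "p \<in> shn 1 ` F Ps"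
          using Cons Suc by (intro image_eqI[of _ _ "j # q"]) auto
      qed
      then show ?thesis using Cons Suc by auto
    qed
  qed
qed

lemma F_append: "F (Ps @ Qs) = F Ps \<union> shn (length Ps) ` F Qs"
proof (rule set_eqI)
  fix p show "p \<in> F (Ps @ Qs) \<longleftrightarrow> p \<in> F Ps \<union> shn (length Ps) ` F Qs"
  proof (cases p)
    case Nil then show ?thesis by (auto simp: shn_def split: list.splits)
  next
    case (Cons i q)
    have "p \<in> shn (length Ps) ` F Qs \<longleftrightarrow> length Ps \<le> i \<and> (i - length Ps) # q \<in> F Qs"
    proof
      assume "p \<in> shn (length Ps) ` F Qs"
      then obtain r where "r \<in> F Qs" "p = shn (length Ps) r" by blast
      then show "length Ps \<le> i \<and> (i - length Ps) # q \<in> F Qs" using Cons by (cases r) auto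
    next
      assume "length Ps \<le> i \<and> (i - length Ps) # q \<in> F Qs" then show "p \<in> shn (length Ps) ` F Qs"
        using Cons by (intro image_eqI[of _ _ "(i - length Ps) # q"]) auto
    qed
    then show ?thesis using Cons by (auto simp: nth_append)
  qed
qed

lemma F_nonempty: "p \<in> F Ps \<Longrightarrow> p \<noteq> []"
  by auto

lemma sep_Cons_shn: "0 < n \<Longrightarrow> [] \<notin> Q \<Longrightarrow> sep (Cons 0 ` P) (shn n ` Q)"
  unfolding sep_def by (auto simp: shn_def split: list.splits)

lemma sep_F_shn: "[] \<notin> Q \<Longrightarrow> sep (F Ps) (shn (length Ps) ` Q)"
  unfolding sep_def by (auto simp: shn_def F_mem split: list.splits)

lemma piso_F_Cons:
  assumes "piso P Q" "piso (F Ps) (F Qs)"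
  shows "piso (F (P # Ps)) (F (Q # Qs))"
  unfolding F_Cons
proof (rule piso_union)
  show "piso (Cons 0 ` P) (Cons 0 ` Q)"
    by (meson assms(1) piso_Cons piso_sym piso_trans)
  show "piso (shn 1 ` F Ps) (shn 1 ` F Qs)"
    by (meson assms(2) piso_shn piso_sym piso_trans Nil_notin_F)
qed (auto intro: sep_Cons_shn)

lemma piso_F_list_all2: "list_all2 piso Ps Qs \<Longrightarrow> piso (F Ps) (F Qs)"
  by (induction rule: list_all2_induct) (auto intro: piso_F_Cons piso_refl)


lemma piso_F_bij:
  assumes pi: "bij_betw \<pi> {..<length Ps} {..<length Qs}"
    and h: "\<forall>i<length Ps. piso (Ps!i) (Qs!(\<pi> i))"
  shows "piso (F Ps) (F Qs)"
proof -
  from h have "\<forall>i\<in>{..<length Ps}. \<exists>f. bij_betw f (Ps!i) (Qs!(\<pi> i)) \<and>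
      (\<forall>x\<in>Ps!i. \<forall>y\<in>Ps!i. prefix x y \<longleftrightarrow> prefix (f x) (f y))"
    unfolding piso_def by auto
  from bchoice[OF this] obtain fs where fs: "\<forall>i\<in>{..<length Ps}. bij_betw (fs i) (Ps!i) (Qs!(\<pi> i)) \<and>
      (\<forall>x\<in>Ps!i. \<forall>y\<in>Ps!i. prefix x y \<longleftrightarrow> prefix (fs i x) (fs i y))"
    by blast
  have fsb: "bij_betw (fs i) (Ps!i) (Qs!(\<pi> i))" if "i < length Ps" for i using fs that by blast
  have fso: "prefix x y \<longleftrightarrow> prefix (fs i x) (fs i y)" if "i < length Ps" "x \<in> Ps!i" "y \<in> Ps!i" for i x y
    using fs that by blast
  have piinj: "inj_on \<pi> {..<length Ps}" and piim: "\<pi> ` {..<length Ps} = {..<length Qs}"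
    using pi by (auto simp: bij_betw_def)
  define g where "g p = \<pi> (hd p) # fs (hd p) (tl p)" for p
  have gC: "g (i # p) = \<pi> i # fs i p" for i p by (simp add: g_def)
  have inj: "inj_on g (F Ps)"
  proof
    fix x y assume x: "x \<in> F Ps" and y: "y \<in> F Ps" and e: "g x = g y"
    from x obtain i p where xi: "x = i # p" "i < length Ps" "p \<in> Ps!i" by (auto simp: F_mem)
    from y obtain j q where yj: "y = j # q" "j < length Ps" "q \<in> Ps!j" by (auto simp: F_mem)
    from e xi yj have "\<pi> i = \<pi> j" by (simp add: gC)
    then have ij: "i = j" using piinj xi yj by (auto dest: inj_onD)
    from e xi yj ij have "fs i p = fs i q" by (simp add: gC)
    then have "p = q" using fsb[OF xi(2)] xi(3) yj(3) ij unfolding bij_betw_def by (metis inj_onD)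
    then show "x = y" using xi yj ij by simp
  qed
  have im: "g ` F Ps = F Qs"
  proof
    show "g ` F Ps \<subseteq> F Qs"
    proof
      fix z assume "z \<in> g ` F Ps"
      then obtain i p where "z = g (i # p)" "i < length Ps" "p \<in> Ps!i" by (auto simp: F_mem)
      moreover have "\<pi> i < length Qs" using piim \<open>i < length Ps\<close> by auto
      moreover have "fs i p \<in> Qs!(\<pi> i)" using fsb[OF \<open>i < length Ps\<close>] \<open>p \<in> Ps!i\<close> by (auto simp: bij_betw_def)
      ultimately show "z \<in> F Qs" by (simp add: gC)
    qed
    show "F Qs \<subseteq> g ` F Ps"
    proof
      fix z assume "z \<in> F Qs"
      then obtain j q where z: "z = j # q" "j < length Qs" "q \<in> Qs!j" by (auto simp: F_mem)
      then obtain i where i: "i < length Ps" "\<pi> i = j" using piim by (metis imageE lessThan_iff)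
      then have "q \<in> fs i ` (Ps!i)" using fsb[OF i(1)] z by (auto simp: bij_betw_def)
      then obtain p where p: "p \<in> Ps!i" "q = fs i p" by blast
      have "z = g (i # p)" using z i p by (simp add: gC)
      moreover have "i # p \<in> F Ps" using i p by simp
      ultimately show "z \<in> g ` F Ps" by blast
    qed
  qed
  have ord: "\<forall>x\<in>F Ps. \<forall>y\<in>F Ps. prefix x y \<longleftrightarrow> prefix (g x) (g y)"
  proof (intro ballI)
    fix x y assume x: "x \<in> F Ps" and y: "y \<in> F Ps"
    from x obtain i p where xi: "x = i # p" "i < length Ps" "p \<in> Ps!i" by (auto simp: F_mem)
    from y obtain j q where yj: "y = j # q" "j < length Ps" "q \<in> Ps!j" by (auto simp: F_mem)
    have "\<pi> i = \<pi> j \<longleftrightarrow> i = j" using piinj xi yj by (auto dest: inj_onD)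
    then show "prefix x y \<longleftrightarrow> prefix (g x) (g y)"
      using xi yj fso[of i p q] by (cases "i = j") (simp_all add: gC)
  qed
  show ?thesis unfolding piso_def bij_betw_def using inj im ord by blast
qed

lemma piso_filter_X:
  "piso (F (map X rs)) (F (map X (filter (\<lambda>t. t \<noteq> Leaf) rs)))"
proof (induction rs)
  case Nil then show ?case by (simp add: piso_refl)
next
  case (Cons r rs)
  show ?case
  proof (cases "r = Leaf")
    case True
    have "F (map X (r # rs)) = shn 1 ` F (map X rs)" using True by (simp add: F_Cons)
    moreover have "piso (shn 1 ` F (map X rs)) (F (map X rs))"
      by (rule piso_sym, rule piso_shn) simp
    ultimately have "piso (F (map X (r # rs))) (F (map X rs))" by simp
    also note Cons.IH
    also have "filter (\<lambda>t. t \<noteq> Leaf) rs = filter (\<lambda>t. t \<noteq> Leaf) (r # rs)" using True by simp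
    finally show ?thesis .
  next
    case False
    have "piso (F (X r # map X rs)) (F (X r # map X (filter (\<lambda>t. t \<noteq> Leaf) rs)))"
      by (rule piso_F_Cons[OF piso_refl Cons.IH])
    then show ?thesis using False by simp
  qed
qed

lemma piso_F_concat: "piso (F (map F Pss)) (F (concat Pss))"
proof (induction Pss)
  case Nil then show ?case by (simp add: piso_refl)
next
  case (Cons Ps Pss)
  have "F (map F (Ps # Pss)) = Cons 0 ` F Ps \<union> shn 1 ` F (map F Pss)" by (simp add: F_Cons)
  moreover have "F (concat (Ps # Pss)) = F Ps \<union> shn (length Ps) ` F (concat Pss)" by (simp add: F_append)
  moreover have "piso (Cons 0 ` F Ps \<union> shn 1 ` F (map F Pss)) (F Ps \<union> shn (length Ps) ` F (concat Pss))"
  proof (rule piso_union)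
    show "piso (Cons 0 ` F Ps) (F Ps)" by (rule piso_sym, rule piso_Cons)
    have "piso (shn 1 ` F (map F Pss)) (F (map F Pss))" by (rule piso_sym, rule piso_shn) simp
    also note Cons.IH
    also have "piso (F (concat Pss)) (shn (length Ps) ` F (concat Pss))" by (rule piso_shn) simp
    finally show "piso (shn 1 ` F (map F Pss)) (shn (length Ps) ` F (concat Pss))" .
    show "sep (Cons 0 ` F Ps) (shn 1 ` F (map F Pss))" by (rule sep_Cons_shn) auto
    show "sep (F Ps) (shn (length Ps) ` F (concat Pss))" by (rule sep_F_shn) auto
  qed
  ultimately show ?case by simp
qed


definition mins :: "nat list set \<Rightarrow> nat list set" where
  "mins A = {m\<in>A. \<forall>y\<in>A. prefix y m \<longrightarrow> y = m}"

definition ups :: "nat list set \<Rightarrow> nat list \<Rightarrow> nat list set" where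
  "ups A m = {y\<in>A. prefix m y \<and> y \<noteq> m}"

declare image_mset_cong[fundef_cong]

function fsh :: "nat list set \<Rightarrow> shadow multiset" where
  "fsh A = (if finite A then image_mset (\<lambda>m. Sh (fsh (ups A m))) (mset_set (mins A)) else {#})"
  by auto
termination
proof (relation "measure card")
  fix A m assume "finite A" "m \<in># mset_set (mins A)"
  then have "m \<in> A" "ups A m \<subseteq> A - {m}" by (auto simp: mins_def ups_def)
  then show "(ups A m, A) \<in> measure card"
    using \<open>finite A\<close> by (auto intro: psubset_card_mono)
qed auto

declare fsh.simps[simp del]

lemma fsh_empty[simp]: "fsh {} = {#}"
  by (simp add: fsh.simps mins_def)

lemma fsh_piso_aux:
  "finite A \<Longrightarrow> bij_betw f A B \<Longrightarrow> (\<forall>x\<in>A. \<forall>y\<in>A. prefix x y \<longleftrightarrow> prefix (f x) (f y)) \<Longrightarrow> fsh A = fsh B"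
proof (induction "card A" arbitrary: A B f rule: less_induct)
  case less
  note A = less.prems(1) and fb = less.prems(2) and fo = less.prems(3)
  have finB: "finite B" using A fb bij_betw_finite by blast
  have inj: "inj_on f A" and fA: "f ` A = B" using fb by (auto simp: bij_betw_def)
  have fin: "f x \<in> B" if "x \<in> A" for x using fA that by blast
  have eqv: "f x = f y \<longleftrightarrow> x = y" if "x \<in> A" "y \<in> A" for x y using inj that by (auto dest: inj_onD)
  have mins_img: "f ` mins A = mins B"
  proof
    show "f ` mins A \<subseteq> mins B"
    proof
      fix z assume "z \<in> f ` mins A"
      then obtain m where m: "m \<in> mins A" "z = f m" by blast
      have "\<forall>y\<in>B. prefix y z \<longrightarrow> y = z"
      proof (intro ballI impI)
        fix y assume "y \<in> B" "prefix y z"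
        then obtain x where "x \<in> A" "y = f x" using fA by blast
        then show "y = z" using m \<open>prefix y z\<close> fo unfolding mins_def by auto
      qed
      then show "z \<in> mins B" using m fin unfolding mins_def by auto
    qed
    show "mins B \<subseteq> f ` mins A"
    proof
      fix z assume z: "z \<in> mins B"
      then obtain m where m: "m \<in> A" "z = f m" using fA unfolding mins_def by blast
      have "\<forall>y\<in>A. prefix y m \<longrightarrow> y = m"
        using z m fo fin eqv unfolding mins_def by auto
      then show "z \<in> f ` mins A" using m unfolding mins_def by auto
    qed
  qed
  have ups_img: "f ` ups A m = ups B (f m)" if "m \<in> A" for m
  proof
    show "f ` ups A m \<subseteq> ups B (f m)"
      using that fo fin eqv unfolding ups_def by auto
    show "ups B (f m) \<subseteq> f ` ups A m"
    proof
      fix z assume z: "z \<in> ups B (f m)"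
      then obtain x where "x \<in> A" "z = f x" using fA unfolding ups_def by blast
      then show "z \<in> f ` ups A m" using z that fo eqv unfolding ups_def by auto
    qed
  qed
  have rec: "fsh (ups A m) = fsh (ups B (f m))" if "m \<in> mins A" for m
  proof (rule less.hyps)
    have mA: "m \<in> A" using that by (simp add: mins_def)
    then have "ups A m \<subseteq> A - {m}" by (auto simp: ups_def)
    then show "card (ups A m) < card A" using A mA by (auto intro: psubset_card_mono)
    show "finite (ups A m)" using A by (simp add: ups_def)
    have "inj_on f (ups A m)" using inj by (rule inj_on_subset) (auto simp: ups_def)
    then show "bij_betw f (ups A m) (ups B (f m))" using ups_img[OF mA] by (simp add: bij_betw_def)
    show "\<forall>x\<in>ups A m. \<forall>y\<in>ups A m. prefix x y \<longleftrightarrow> prefix (f x) (f y)"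
      using fo by (auto simp: ups_def)
  qed
  have "fsh B = image_mset (\<lambda>m. Sh (fsh (ups B m))) (mset_set (mins B))"
    using finB by (simp add: fsh.simps)
  also have "mset_set (mins B) = image_mset f (mset_set (mins A))"
  proof -
    have "inj_on f (mins A)" using inj by (rule inj_on_subset) (auto simp: mins_def)
    then show ?thesis using mins_img by (simp add: image_mset_mset_set)
  qed
  also have "image_mset (\<lambda>m. Sh (fsh (ups B m))) (image_mset f (mset_set (mins A)))
      = image_mset (\<lambda>m. Sh (fsh (ups A m))) (mset_set (mins A))"
  proof -
    have "image_mset (\<lambda>m. Sh (fsh (ups B m))) (image_mset f (mset_set (mins A)))
       = image_mset (\<lambda>m. Sh (fsh (ups B (f m)))) (mset_set (mins A))"
      by (simp add: multiset.map_comp comp_def)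
    also have "\<dots> = image_mset (\<lambda>m. Sh (fsh (ups A m))) (mset_set (mins A))"
    proof (rule image_mset_cong)
      fix m assume "m \<in># mset_set (mins A)"
      then have "m \<in> mins A" using A by (simp add: mins_def)
      then show "Sh (fsh (ups B (f m))) = Sh (fsh (ups A m))" using rec by simp
    qed
    finally show ?thesis .
  qed
  also have "\<dots> = fsh A" using A by (simp add: fsh.simps)
  finally show ?case by simp
qed

lemma fsh_piso: "piso A B \<Longrightarrow> finite A \<Longrightarrow> fsh A = fsh B"
  unfolding piso_def using fsh_piso_aux by blast

lemma fsh_union:
  assumes "finite A" "finite B" "sep A B"
  shows "fsh (A \<union> B) = fsh A + fsh B"
proof -
  have d: "A \<inter> B = {}" using assms(3) unfolding sep_def by blast
  have m: "mins (A \<union> B) = mins A \<union> mins B"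
    using assms(3) unfolding mins_def sep_def by auto
  have uA: "ups (A \<union> B) m = ups A m" if "m \<in> A" for m
    using assms(3) that unfolding ups_def sep_def by auto
  have uB: "ups (A \<union> B) m = ups B m" if "m \<in> B" for m
    using assms(3) that unfolding ups_def sep_def by auto
  have dm: "mins A \<inter> mins B = {}" using d by (auto simp: mins_def)
  have fm: "finite (mins A)" "finite (mins B)" using assms by (auto simp: mins_def)
  have "fsh (A \<union> B) = image_mset (\<lambda>m. Sh (fsh (ups (A \<union> B) m))) (mset_set (mins A) + mset_set (mins B))"
    using assms(1,2) by (simp add: fsh.simps m mset_set_Union[OF fm dm])
  also have "\<dots> = image_mset (\<lambda>m. Sh (fsh (ups (A \<union> B) m))) (mset_set (mins A))
       + image_mset (\<lambda>m. Sh (fsh (ups (A \<union> B) m))) (mset_set (mins B))" by simp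
  also have "image_mset (\<lambda>m. Sh (fsh (ups (A \<union> B) m))) (mset_set (mins A))
      = image_mset (\<lambda>m. Sh (fsh (ups A m))) (mset_set (mins A))"
    by (rule image_mset_cong) (use fm uA in \<open>auto simp: mins_def\<close>)
  also have "image_mset (\<lambda>m. Sh (fsh (ups (A \<union> B) m))) (mset_set (mins B))
      = image_mset (\<lambda>m. Sh (fsh (ups B m))) (mset_set (mins B))"
    by (rule image_mset_cong) (use fm uB in \<open>auto simp: mins_def\<close>)
  finally show ?thesis using assms(1,2) by (simp add: fsh.simps)
qed

lemma fsh_root:
  assumes "finite A" "[] \<in> A"
  shows "fsh A = {# Sh (fsh (A - {[]})) #}"
proof -
  have "mins A = {[]}" using assms(2) unfolding mins_def by auto
  moreover have "ups A [] = A - {[]}" unfolding ups_def by auto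
  ultimately show ?thesis using assms(1) by (simp add: fsh.simps)
qed


lemma fsh_F_Cons:
  assumes "finite P" "finite (F Ps)"
  shows "fsh (F (P # Ps)) = fsh P + fsh (F Ps)"
proof -
  have "fsh (F (P # Ps)) = fsh (Cons 0 ` P) + fsh (shn 1 ` F Ps)"
    unfolding F_Cons using assms by (intro fsh_union sep_Cons_shn) auto
  moreover have "fsh P = fsh (Cons 0 ` P)" using assms(1) piso_Cons by (rule fsh_piso[rotated])
  moreover have "fsh (F Ps) = fsh (shn 1 ` F Ps)" using assms(2) by (intro fsh_piso piso_shn) auto
  ultimately show ?thesis by simp
qed

lemma finite_F_map_X: "finite (F (map X ts))"
  by (rule finite_F) (auto simp: finite_X)

lemma fsh_F_map_X:
  "(\<forall>t\<in>set ts. fsh (X t) = (if t = Leaf then {#} else {#sh t#})) \<Longrightarrow>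
    fsh (F (map X ts)) = mset (map sh (filter (\<lambda>t. t \<noteq> Leaf) ts))"
proof (induction ts)
  case Nil then show ?case by simp
next
  case (Cons t ts)
  have "fsh (F (map X (t # ts))) = fsh (X t) + fsh (F (map X ts))"
    using fsh_F_Cons[OF finite_X finite_F_map_X] by simp
  then show ?case using Cons by (simp del: X.simps)
qed

lemma fsh_X: "fsh (X r) = (if r = Leaf then {#} else {#sh r#})"
proof (induction r)
  case Leaf then show ?case by simp
next
  case (Node a ts)
  have "fsh (X (Node a ts)) = {# Sh (fsh (X (Node a ts) - {[]})) #}"
    by (rule fsh_root) (simp only: finite_X, simp)
  also have "X (Node a ts) - {[]} = F (map X ts)" by auto
  also have "fsh (F (map X ts)) = mset (map sh (filter (\<lambda>t. t \<noteq> Leaf) ts))"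
    using Node by (intro fsh_F_map_X) auto
  finally show ?case by simp
qed

lemma fsh_F_diamond: "fsh (F (map X rs)) = mset (map sh (filter (\<lambda>t. t \<noteq> Leaf) rs))"
  by (intro fsh_F_map_X ballI) (simp only: fsh_X)

lemma F_diff:
  assumes "length Ps = length Qs"
  shows "F Ps - F Qs = F (map (\<lambda>i. Ps!i - Qs!i) [0..<length Ps])"
proof (rule set_eqI)
  fix p show "p \<in> F Ps - F Qs \<longleftrightarrow> p \<in> F (map (\<lambda>i. Ps!i - Qs!i) [0..<length Ps])"
    using assms by (cases p) auto
qed

lemma Y_piso: "pre s t \<Longrightarrow> piso (X t - X s) (F (map X (diff s t)))"
proof (induction s arbitrary: t)
  case Leaf
  have "F (map X (diff Leaf t)) = Cons 0 ` X t" by (simp add: F_Cons)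
  then show ?case using piso_Cons by simp
next
  case (Node a ss)
  from Node.prems obtain ts where t: "t = Node a ts" "length ss = length ts" "\<forall>i<length ss. pre (ss!i) (ts!i)"
    by (cases t) auto
  let ?n = "length ss"
  have "X t - X (Node a ss) = F (map X ts) - F (map X ss)" using t by auto
  also have "\<dots> = F (map (\<lambda>i. X (ts!i) - X (ss!i)) [0..<?n])"
  proof -
    have "map (\<lambda>i. map X ts ! i - map X ss ! i) [0..<length ts] = map (\<lambda>i. X (ts!i) - X (ss!i)) [0..<?n]"
      using t by (intro map_cong) auto
    moreover have "F (map X ts) - F (map X ss) = F (map (\<lambda>i. map X ts ! i - map X ss ! i) [0..<length ts])"
      using F_diff[of "map X ts" "map X ss"] t by simp
    ultimately show ?thesis using t by metis
  qed
  finally have e1: "X t - X (Node a ss) = F (map (\<lambda>i. X (ts!i) - X (ss!i)) [0..<?n])" .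
  let ?Pss = "map (\<lambda>i. map X (diff (ss!i) (ts!i))) [0..<?n]"
  have "list_all2 piso (map (\<lambda>i. X (ts!i) - X (ss!i)) [0..<?n]) (map F ?Pss)"
    unfolding list_all2_conv_all_nth using Node.IH t by simp
  then have "piso (F (map (\<lambda>i. X (ts!i) - X (ss!i)) [0..<?n])) (F (map F ?Pss))"
    by (rule piso_F_list_all2)
  also have "piso (F (map F ?Pss)) (F (concat ?Pss))" by (rule piso_F_concat)
  also have "concat ?Pss = map X (diff (Node a ss) t)"
    using t by (simp add: map_concat comp_def)
  finally show ?case using e1 by simp
qed


lemma piso_insert_Nil:
  assumes "piso A B" "[] \<notin> A" "[] \<notin> B"
  shows "piso (insert [] A) (insert [] B)"
proof -
  from assms obtain f where f: "bij_betw f A B" "\<forall>x\<in>A. \<forall>y\<in>A. prefix x y \<longleftrightarrow> prefix (f x) (f y)"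
    unfolding piso_def by blast
  define g where "g x = (if x = [] then [] else f x)" for x
  have fB: "f x \<in> B" if "x \<in> A" for x using f(1) that by (auto simp: bij_betw_def)
  have fne: "f x \<noteq> []" if "x \<in> A" for x using fB[OF that] assms(3) by auto
  have xne: "x \<noteq> []" if "x \<in> A" for x using that assms(2) by auto
  have gn: "g z = [] \<longleftrightarrow> z = []" if "z \<in> insert [] A" for z
    using that fne by (auto simp: g_def)
  have inj: "inj_on g (insert [] A)"
    unfolding inj_on_def
  proof (intro ballI impI)
    fix x y assume x: "x \<in> insert [] A" and y: "y \<in> insert [] A" and e: "g x = g y"
    show "x = y"
    proof (cases "x = []")
      case True then show ?thesis using gn[OF x] gn[OF y] e by simp
    next
      case False
      then have "y \<noteq> []" using gn[OF x] gn[OF y] e by simp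
      then have "x \<in> A" "y \<in> A" "f x = f y" using x y e False by (auto simp: g_def)
      then show "x = y" using f(1) by (auto simp: bij_betw_def dest: inj_onD)
    qed
  qed
  have "g ` A = f ` A" using xne by (auto simp: g_def)
  then have im: "g ` insert [] A = insert [] B" using f(1) by (auto simp: g_def bij_betw_def)
  have "\<forall>x\<in>insert [] A. \<forall>y\<in>insert [] A. prefix x y \<longleftrightarrow> prefix (g x) (g y)"
    using f(2) fne xne by (auto simp: g_def)
  then show ?thesis unfolding piso_def bij_betw_def using inj im by blast
qed

lemma perm_piso_gen:
  assumes h: "\<And>u u'. u \<in> set us \<Longrightarrow> u' \<in> set us' \<Longrightarrow> sh u = sh u' \<Longrightarrow> piso (X u) (X u')"
    and m: "mset (map sh us) = mset (map sh us')"
  shows "piso (F (map X us)) (F (map X us'))"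
proof -
  from m obtain p where p: "p permutes {..<length (map sh us')}" "permute_list p (map sh us') = map sh us"
    by (rule mset_eq_permutation)
  have len: "length us = length us'" using m by (metis length_map mset_eq_length)
  have pl: "p permutes {..<length us'}" using p(1) by simp
  show ?thesis
  proof (rule piso_F_bij)
    show "bij_betw p {..<length (map X us)} {..<length (map X us')}"
      using permutes_imp_bij[OF pl] len by simp
    show "\<forall>i<length (map X us). piso (map X us ! i) (map X us' ! p i)"
    proof (intro allI impI)
      fix i assume "i < length (map X us)"
      then have i: "i < length us" by simp
      have pi: "p i < length us'" using permutes_in_image[OF pl] i len by simp
      have "sh (us!i) = map sh us ! i" using i by simp
      also have "\<dots> = permute_list p (map sh us') ! i" using p(2) by simp
      also have "\<dots> = map sh us' ! p i" using permute_list_nth[OF p(1)] i len by simp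
      also have "\<dots> = sh (us' ! p i)" using pi by simp
      finally have "piso (X (us!i)) (X (us' ! p i))" using h i pi by simp
      then show "piso (map X us ! i) (map X us' ! p i)" using i pi by simp
    qed
  qed
qed

lemma sh_piso: "r \<noteq> Leaf \<Longrightarrow> r' \<noteq> Leaf \<Longrightarrow> sh r = sh r' \<Longrightarrow> piso (X r) (X r')"
proof (induction r arbitrary: r')
  case Leaf then show ?case by simp
next
  case (Node a ts)
  from Node.prems obtain b ts' where r': "r' = Node b ts'" by (cases r') auto
  let ?nl = "\<lambda>t. t \<noteq> Leaf"
  have m: "mset (map sh (filter ?nl ts)) = mset (map sh (filter ?nl ts'))"
    using Node.prems r' by simp
  have "piso (F (map X ts)) (F (map X (filter ?nl ts)))" by (rule piso_filter_X)
  also have "piso (F (map X (filter ?nl ts))) (F (map X (filter ?nl ts')))"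
  proof (rule perm_piso_gen[OF _ m])
    fix u u' assume "u \<in> set (filter ?nl ts)" "u' \<in> set (filter ?nl ts')" "sh u = sh u'"
    then show "piso (X u) (X u')" using Node.IH by auto
  qed
  also have "piso (F (map X (filter ?nl ts'))) (F (map X ts'))" by (rule piso_sym, rule piso_filter_X)
  finally have "piso (insert [] (F (map X ts))) (insert [] (F (map X ts')))"
    by (rule piso_insert_Nil) simp_all
  then show ?case using r' by simp
qed

lemma diamond_piso:
  assumes "mset (map sh (filter (\<lambda>t. t \<noteq> Leaf) rs)) = mset (map sh (filter (\<lambda>t. t \<noteq> Leaf) rs')) "
  shows "piso (F (map X rs)) (F (map X rs'))"
proof -
  let ?nl = "\<lambda>t. t \<noteq> Leaf"
  have "piso (F (map X rs)) (F (map X (filter ?nl rs)))" by (rule piso_filter_X)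
  also have "piso (F (map X (filter ?nl rs))) (F (map X (filter ?nl rs')))"
  proof (rule perm_piso_gen[OF _ assms])
    fix u u' assume "u \<in> set (filter ?nl rs)" "u' \<in> set (filter ?nl rs')" "sh u = sh u'"
    then show "piso (X u) (X u')" using sh_piso by auto
  qed
  also have "piso (F (map X (filter ?nl rs'))) (F (map X rs'))" by (rule piso_sym, rule piso_filter_X)
  finally show ?thesis .
qed


definition down :: "nat list set \<Rightarrow> nat list set set" where
  "down Y = {D. D \<subseteq> Y \<and> (\<forall>p\<in>D. \<forall>q\<in>Y. prefix q p \<longrightarrow> q \<in> D)}"

definition liso :: "'b set set \<Rightarrow> 'c set set \<Rightarrow> bool" where
  "liso L M \<longleftrightarrow> (\<exists>h. bij_betw h L M \<and> (\<forall>x\<in>L. \<forall>y\<in>L. x \<subseteq> y \<longleftrightarrow> h x \<subseteq> h y))"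

definition JI :: "'b set set \<Rightarrow> 'b set set" where
  "JI L = {D\<in>L. \<exists>E\<in>L. E \<subset> D \<and> (\<forall>Z\<in>L. Z \<subset> D \<longrightarrow> Z \<subseteq> E)}"

definition pd :: "nat list set \<Rightarrow> nat list \<Rightarrow> nat list set" where
  "pd Y y = {q\<in>Y. prefix q y}"

lemma ptrans: "prefix a b \<Longrightarrow> prefix b c \<Longrightarrow> prefix a c"
  by (rule prefix_order.order_trans)

lemma pd_down: "y \<in> Y \<Longrightarrow> pd Y y \<in> down Y"
  unfolding pd_def down_def using ptrans by blast

lemma pd_mono: "y \<in> Y \<Longrightarrow> z \<in> Y \<Longrightarrow> pd Y y \<subseteq> pd Y z \<longleftrightarrow> prefix y z"
proof
  assume "y \<in> Y" "pd Y y \<subseteq> pd Y z"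
  then have "y \<in> pd Y z" by (auto simp: pd_def)
  then show "prefix y z" by (simp add: pd_def)
next
  assume "prefix y z"
  then show "pd Y y \<subseteq> pd Y z" unfolding pd_def using ptrans by blast
qed

lemma pd_inj: "y \<in> Y \<Longrightarrow> z \<in> Y \<Longrightarrow> pd Y y = pd Y z \<Longrightarrow> y = z"
proof -
  assume a: "y \<in> Y" "z \<in> Y" "pd Y y = pd Y z"
  then have "prefix y z" "prefix z y" using pd_mono[of y Y z] pd_mono[of z Y y] by auto
  then show "y = z" by (rule prefix_order.antisym)
qed

lemma JI_down:
  assumes fin: "finite Y"
  shows "JI (down Y) = pd Y ` Y"
proof
  show "pd Y ` Y \<subseteq> JI (down Y)"
  proof
    fix D assume "D \<in> pd Y ` Y"
    then obtain y where y: "y \<in> Y" "D = pd Y y" by blast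
    let ?E = "pd Y y - {y}"
    have E: "?E \<in> down Y"
    proof -
      have "q \<in> ?E" if "p \<in> ?E" "q \<in> Y" "prefix q p" for p q
      proof -
        have py: "prefix p y" "p \<noteq> y" using that(1) by (auto simp: pd_def)
        then have "prefix q y" using that(3) ptrans by blast
        moreover have "q \<noteq> y"
        proof
          assume "q = y"
          then have "prefix y p" using that(3) by simp
          then show False using py prefix_order.antisym by blast
        qed
        ultimately show ?thesis using that(2) by (simp add: pd_def)
      qed
      moreover have "?E \<subseteq> Y" by (auto simp: pd_def)
      ultimately show ?thesis unfolding down_def by blast
    qed
    have "?E \<subset> D" using y by (auto simp: pd_def)
    moreover have "\<forall>Z\<in>down Y. Z \<subset> D \<longrightarrow> Z \<subseteq> ?E"
    proof (intro ballI impI)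
      fix Z assume Z: "Z \<in> down Y" "Z \<subset> D"
      have "y \<notin> Z"
      proof
        assume "y \<in> Z"
        then have "D \<subseteq> Z" using Z(1) y unfolding down_def pd_def by auto
        then show False using Z(2) by auto
      qed
      then show "Z \<subseteq> ?E" using Z(2) y(2) by auto
    qed
    ultimately show "D \<in> JI (down Y)" unfolding JI_def using E y pd_down by blast
  qed
  show "JI (down Y) \<subseteq> pd Y ` Y"
  proof
    fix D assume "D \<in> JI (down Y)"
    then obtain E where D: "D \<in> down Y" and E: "E \<in> down Y" "E \<subset> D" "\<forall>Z\<in>down Y. Z \<subset> D \<longrightarrow> Z \<subseteq> E"
      unfolding JI_def by blast
    have DY: "D \<subseteq> Y" using D by (simp add: down_def)
    have Dcl: "q \<in> D" if "p \<in> D" "q \<in> Y" "prefix q p" for p q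
      using D that unfolding down_def by blast
    have finD: "finite D" using DY fin by (rule finite_subset)
    have ne: "D \<noteq> {}" using E(2) by blast
    define m where "m = Max (length ` D)"
    have "m \<in> length ` D" unfolding m_def using finD ne by (intro Max_in) auto
    then obtain y where y1: "y \<in> D" "length y = m" by blast
    have y2: "length p \<le> length y" if "p \<in> D" for p
    proof -
      have "length p \<le> Max (length ` D)" using finD that by (intro Max_ge) auto
      then show ?thesis using y1(2) m_def by simp
    qed
    have yY: "y \<in> Y" using y1 DY by blast
    have sub: "pd Y y \<subseteq> D"
    proof
      fix q assume "q \<in> pd Y y"
      then have "q \<in> Y" "prefix q y" by (auto simp: pd_def)
      then show "q \<in> D" using Dcl y1(1) by blast
    qed
    show "D \<in> pd Y ` Y"
    proof (rule ccontr)
      assume nD: "D \<notin> pd Y ` Y"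
      then have "pd Y y \<noteq> D" using yY by blast
      then have "pd Y y \<subset> D" using sub by blast
      then have "pd Y y \<subseteq> E" using E(3) pd_down[OF yY] by blast
      then have yE: "y \<in> E" using yY by (auto simp: pd_def)
      have "D - {y} \<in> down Y"
      proof -
        have "q \<in> D - {y}" if pq: "p \<in> D - {y}" "q \<in> Y" "prefix q p" for p q
        proof -
          have "q \<in> D" using pq Dcl by blast
          moreover have "q \<noteq> y"
          proof
            assume "q = y"
            then have "prefix y p" "p \<noteq> y" using pq by auto
            then have "length y < length p"
              using prefix_length_less[of y p] by (simp add: strict_prefix_def)
            moreover have "length p \<le> length y" using y2 pq(1) by blast
            ultimately show False by simp
          qed
          ultimately show ?thesis by blast
        qed
        moreover have "D - {y} \<subseteq> Y" using DY by blast
        ultimately show ?thesis unfolding down_def by blast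
      qed
      moreover have "D - {y} \<subset> D" using y1(1) by blast
      ultimately have "D - {y} \<subseteq> E" using E(3) by blast
      then have "D \<subseteq> E" using yE by blast
      then show False using E(2) by blast
    qed
  qed
qed

lemma iso_JI_sub:
  assumes h: "bij_betw h L M" and o: "\<forall>x\<in>L. \<forall>y\<in>L. x \<subseteq> y \<longleftrightarrow> h x \<subseteq> h y"
  shows "h ` JI L \<subseteq> JI M"
proof
  fix D' assume "D' \<in> h ` JI L"
  then obtain D where D: "D \<in> JI L" "D' = h D" by blast
  then obtain E where DL: "D \<in> L" and E: "E \<in> L" "E \<subset> D" "\<forall>Z\<in>L. Z \<subset> D \<longrightarrow> Z \<subseteq> E"
    unfolding JI_def by blast
  have hM: "h x \<in> M" if "x \<in> L" for x using h that by (auto simp: bij_betw_def)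
  have hE: "h E \<subset> h D" using E(1,2) DL o by auto
  have "\<forall>Z'\<in>M. Z' \<subset> h D \<longrightarrow> Z' \<subseteq> h E"
  proof (intro ballI impI)
    fix Z' assume Z': "Z' \<in> M" "Z' \<subset> h D"
    then obtain Z where Z: "Z \<in> L" "Z' = h Z" using h by (auto simp: bij_betw_def)
    then have "Z \<subset> D" using Z' DL o by auto
    then show "Z' \<subseteq> h E" using E(3) Z o E(1) by auto
  qed
  then show "D' \<in> JI M" unfolding JI_def using D DL E(1) hE hM by blast
qed

lemma iso_inv:
  assumes h: "bij_betw h L M" and o: "\<forall>x\<in>L. \<forall>y\<in>L. x \<subseteq> y \<longleftrightarrow> h x \<subseteq> h y"
  shows "bij_betw (inv_into L h) M L \<and> (\<forall>x\<in>M. \<forall>y\<in>M. x \<subseteq> y \<longleftrightarrow> inv_into L h x \<subseteq> inv_into L h y)"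
proof
  show g: "bij_betw (inv_into L h) M L" using h by (rule bij_betw_inv_into)
  show "\<forall>x\<in>M. \<forall>y\<in>M. x \<subseteq> y \<longleftrightarrow> inv_into L h x \<subseteq> inv_into L h y"
  proof (intro ballI)
    fix x y assume "x \<in> M" "y \<in> M"
    then have "inv_into L h x \<in> L" "inv_into L h y \<in> L" "h (inv_into L h x) = x" "h (inv_into L h y) = y"
      using h g by (auto simp: bij_betw_def f_inv_into_f inv_into_into)
    then show "x \<subseteq> y \<longleftrightarrow> inv_into L h x \<subseteq> inv_into L h y" using o by metis
  qed
qed

lemma iso_JI:
  assumes h: "bij_betw h L M" and o: "\<forall>x\<in>L. \<forall>y\<in>L. x \<subseteq> y \<longleftrightarrow> h x \<subseteq> h y"
  shows "h ` JI L = JI M"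
proof
  show "h ` JI L \<subseteq> JI M" by (rule iso_JI_sub[OF h o])
  let ?g = "inv_into L h"
  from iso_inv[OF h o] have g: "bij_betw ?g M L" "\<forall>x\<in>M. \<forall>y\<in>M. x \<subseteq> y \<longleftrightarrow> ?g x \<subseteq> ?g y" by auto
  have "?g ` JI M \<subseteq> JI L" by (rule iso_JI_sub[OF g])
  moreover have "JI M \<subseteq> M" unfolding JI_def by auto
  ultimately show "JI M \<subseteq> h ` JI L"
  proof (intro subsetI)
    fix D' assume D': "D' \<in> JI M" and gs: "?g ` JI M \<subseteq> JI L" and JM: "JI M \<subseteq> M"
    have "D' \<in> h ` L" using D' JM h by (auto simp: bij_betw_def)
    then have "h (?g D') = D'" by (rule f_inv_into_f)
    moreover have "?g D' \<in> JI L" using gs D' by blast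
    ultimately show "D' \<in> h ` JI L" by (metis image_eqI)
  qed
qed

lemma piso_of_liso:
  assumes fin: "finite Y" "finite Y'" and l: "liso (down Y) (down Y')"
  shows "piso Y Y'"
proof -
  from l obtain h where h: "bij_betw h (down Y) (down Y')"
    and o: "\<forall>x\<in>down Y. \<forall>y\<in>down Y. x \<subseteq> y \<longleftrightarrow> h x \<subseteq> h y"
    unfolding liso_def by blast
  have J: "h ` (pd Y ` Y) = pd Y' ` Y'"
    using iso_JI[OF h o] JI_down[OF fin(1)] JI_down[OF fin(2)] by simp
  have "\<forall>y\<in>Y. \<exists>y'. y' \<in> Y' \<and> h (pd Y y) = pd Y' y'"
    using J by blast
  from bchoice[OF this] obtain f where f: "\<forall>y\<in>Y. f y \<in> Y' \<and> h (pd Y y) = pd Y' (f y)" by blast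
  have ord: "\<forall>x\<in>Y. \<forall>y\<in>Y. prefix x y \<longleftrightarrow> prefix (f x) (f y)"
  proof (intro ballI)
    fix x y assume x: "x \<in> Y" and y: "y \<in> Y"
    have "prefix x y \<longleftrightarrow> pd Y x \<subseteq> pd Y y" using pd_mono[OF x y] by simp
    also have "\<dots> \<longleftrightarrow> h (pd Y x) \<subseteq> h (pd Y y)" using o pd_down[OF x] pd_down[OF y] by blast
    also have "\<dots> \<longleftrightarrow> pd Y' (f x) \<subseteq> pd Y' (f y)" using f x y by simp
    also have "\<dots> \<longleftrightarrow> prefix (f x) (f y)" using pd_mono f x y by simp
    finally show "prefix x y \<longleftrightarrow> prefix (f x) (f y)" .
  qed
  have inj: "inj_on f Y"
    unfolding inj_on_def
  proof (intro ballI impI)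
    fix x y assume x: "x \<in> Y" and y: "y \<in> Y" and e: "f x = f y"
    then have "prefix x y" "prefix y x" using ord by auto
    then show "x = y" by (rule prefix_order.antisym)
  qed
  have im: "f ` Y = Y'"
  proof
    show "f ` Y \<subseteq> Y'" using f by auto
    show "Y' \<subseteq> f ` Y"
    proof
      fix y' assume y': "y' \<in> Y'"
      then have "pd Y' y' \<in> h ` (pd Y ` Y)" using J by auto
      then obtain y where y: "y \<in> Y" "pd Y' y' = h (pd Y y)" by blast
      then have "pd Y' y' = pd Y' (f y)" using f by auto
      then have "y' = f y" using pd_inj y' f y(1) by blast
      then show "y' \<in> f ` Y" using y(1) by blast
    qed
  qed
  show ?thesis unfolding piso_def bij_betw_def using inj im ord by blast
qed

lemma liso_of_piso:
  assumes "piso Y Y'"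
  shows "liso (down Y) (down Y')"
proof -
  from assms obtain f where f: "bij_betw f Y Y'" "\<forall>x\<in>Y. \<forall>y\<in>Y. prefix x y \<longleftrightarrow> prefix (f x) (f y)"
    unfolding piso_def by blast
  have inj: "inj_on f Y" and im: "f ` Y = Y'" using f(1) by (auto simp: bij_betw_def)
  have fd: "f ` D \<in> down Y'" if D: "D \<in> down Y" for D
  proof -
    have "q \<in> f ` D" if pq: "p \<in> f ` D" "q \<in> Y'" "prefix q p" for p q
    proof -
      obtain x where x: "x \<in> D" "p = f x" using pq(1) by blast
      obtain z where z: "z \<in> Y" "q = f z" using pq(2) im by blast
      have xY: "x \<in> Y" using x D by (auto simp: down_def)
      have "prefix z x" using f(2) z xY x pq(3) by auto
      then have "z \<in> D" using D x z unfolding down_def by blast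
      then show ?thesis using z by blast
    qed
    moreover have "f ` D \<subseteq> Y'" using D im by (auto simp: down_def)
    ultimately show ?thesis unfolding down_def by blast
  qed
  have "bij_betw (image f) (down Y) (down Y')"
    unfolding bij_betw_def
  proof
    show "inj_on (image f) (down Y)"
      unfolding inj_on_def
    proof (intro ballI impI)
      fix D E assume "D \<in> down Y" "E \<in> down Y" "f ` D = f ` E"
      then show "D = E" using inj inj_on_image_eq_iff[of f Y D E] by (auto simp: down_def)
    qed
    show "image f ` down Y = down Y'"
    proof
      show "image f ` down Y \<subseteq> down Y'" using fd by blast
      show "down Y' \<subseteq> image f ` down Y"
      proof
        fix E assume E: "E \<in> down Y'"
        let ?D = "{x\<in>Y. f x \<in> E}"
        have "?D \<in> down Y"
          unfolding down_def using E f(2) im unfolding down_def by auto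
        moreover have "f ` ?D = E" using E im unfolding down_def by auto
        ultimately show "E \<in> image f ` down Y" by blast
      qed
    qed
  qed
  moreover have "\<forall>D\<in>down Y. \<forall>E\<in>down Y. D \<subseteq> E \<longleftrightarrow> f ` D \<subseteq> f ` E"
  proof (intro ballI)
    fix D E assume "D \<in> down Y" "E \<in> down Y"
    then have DE: "D \<subseteq> Y" "E \<subseteq> Y" by (auto simp: down_def)
    show "D \<subseteq> E \<longleftrightarrow> f ` D \<subseteq> f ` E"
    proof
      assume "f ` D \<subseteq> f ` E"
      then show "D \<subseteq> E" using inj_on_image_mem_iff[OF inj _ DE(2)] DE(1) by blast
    qed (rule image_mono)
  qed
  ultimately show ?thesis unfolding liso_def by blast
qed


lemma ginterval_mem:
  assumes "gtree_wf G ar s"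
  shows "u \<in> ginterval G ar s t \<longleftrightarrow> gtree_wf G ar u \<and> pre s u \<and> pre u t \<and> gtree_wf G ar t"
proof -
  have "u \<in> ginterval G ar s t \<longleftrightarrow> gtree_wf G ar u \<and> gprefix G ar s u \<and> gprefix G ar u t"
    by (simp add: ginterval_def)
  also have "\<dots> \<longleftrightarrow> gtree_wf G ar u \<and> pre s u \<and> pre u t \<and> gtree_wf G ar t"
    using gprefix_iff[OF assms, of u] gprefix_iff[of G ar u t] by blast
  finally show ?thesis .
qed

lemma interval_down:
  assumes ws: "gtree_wf G ar s" and wt: "gtree_wf G ar t" and st: "pre s t"
  shows "bij_betw (\<lambda>u. X u - X s) (ginterval G ar s t) (down (X t - X s))"
    and "\<forall>u\<in>ginterval G ar s t. \<forall>v\<in>ginterval G ar s t.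
           gprefix G ar u v \<longleftrightarrow> (X u - X s) \<subseteq> (X v - X s)"
proof -
  let ?I = "ginterval G ar s t"
  have mem: "u \<in> ?I \<longleftrightarrow> gtree_wf G ar u \<and> pre s u \<and> pre u t" for u
    using ginterval_mem[OF ws, of u t] wt by blast
  show "\<forall>u\<in>?I. \<forall>v\<in>?I. gprefix G ar u v \<longleftrightarrow> (X u - X s) \<subseteq> (X v - X s)"
  proof (intro ballI)
    fix u v assume u: "u \<in> ?I" and v: "v \<in> ?I"
    then have uu: "gtree_wf G ar u" "pre s u" "pre u t" and vv: "gtree_wf G ar v" "pre s v" "pre v t"
      using mem by auto
    have "gprefix G ar u v \<longleftrightarrow> pre u v" using gprefix_iff[OF uu(1)] vv(1) by blast
    also have "\<dots> \<longleftrightarrow> X u \<subseteq> X v" by (rule pre_iff_X[OF uu(3) vv(3)])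
    also have "\<dots> \<longleftrightarrow> X u - X s \<subseteq> X v - X s"
      using pre_X[OF uu(2)] pre_X[OF vv(2)] by blast
    finally show "gprefix G ar u v \<longleftrightarrow> (X u - X s) \<subseteq> (X v - X s)" .
  qed
  show "bij_betw (\<lambda>u. X u - X s) ?I (down (X t - X s))"
    unfolding bij_betw_def
  proof
    show "inj_on (\<lambda>u. X u - X s) ?I"
      unfolding inj_on_def
    proof (intro ballI impI)
      fix u v assume u: "u \<in> ?I" and v: "v \<in> ?I" and e: "X u - X s = X v - X s"
      then have uu: "pre s u" "pre u t" and vv: "pre s v" "pre v t" using mem by auto
      have "X u = X v" using e pre_X[OF uu(1)] pre_X[OF vv(1)] by blast
      then show "u = v" by (rule X_inj[OF uu(2) vv(2)])
    qed
    show "(\<lambda>u. X u - X s) ` ?I = down (X t - X s)"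
    proof
      show "(\<lambda>u. X u - X s) ` ?I \<subseteq> down (X t - X s)"
      proof
        fix D assume "D \<in> (\<lambda>u. X u - X s) ` ?I"
        then obtain u where u: "u \<in> ?I" "D = X u - X s" by blast
        then have uu: "pre s u" "pre u t" using mem by auto
        have "D \<subseteq> X t - X s" using u(2) pre_X[OF uu(2)] by blast
        moreover have "q \<in> D" if "p \<in> D" "q \<in> X t - X s" "prefix q p" for p q
          using that u(2) X_closed[of p u q] by blast
        ultimately show "D \<in> down (X t - X s)" unfolding down_def by blast
      qed
      show "down (X t - X s) \<subseteq> (\<lambda>u. X u - X s) ` ?I"
      proof
        fix D assume D: "D \<in> down (X t - X s)"
        have DY: "D \<subseteq> X t - X s" using D by (simp add: down_def)
        have Dcl: "q \<in> D" if "p \<in> D" "q \<in> X t - X s" "prefix q p" for p q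
          using D that unfolding down_def by blast
        let ?u = "restr t (D \<union> X s)"
        have cl: "\<forall>p\<in>D \<union> X s. \<forall>q\<in>X t. prefix q p \<longrightarrow> q \<in> D \<union> X s"
        proof (intro ballI impI)
          fix p q assume p: "p \<in> D \<union> X s" and q: "q \<in> X t" and pq: "prefix q p"
          show "q \<in> D \<union> X s"
          proof (cases "q \<in> X s")
            case False
            show ?thesis
            proof (cases "p \<in> X s")
              case True then show ?thesis using X_closed[OF True pq] by blast
            next
              case False2: False
              then have "p \<in> D" using p by blast
              then show ?thesis using Dcl[of p q] q False pq by blast
            qed
          qed blast
        qed
        have Xu: "X ?u = D \<union> X s"
          using restr_X[OF cl] DY pre_X[OF st] by blast
        have u1: "gtree_wf G ar ?u" using restr_wf[OF wt] .
        have u3: "pre ?u t" by (rule restr_pre)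
        have u2: "pre s ?u" using pre_iff_X[OF st u3] Xu by blast
        have "?u \<in> ?I" using mem u1 u2 u3 by blast
        moreover have "D = X ?u - X s" using Xu DY by blast
        ultimately show "D \<in> (\<lambda>u. X u - X s) ` ?I" by blast
      qed
    qed
  qed
qed

lemma transfer_iso:
  assumes p: "bij_betw \<phi> I L" and po: "\<forall>u\<in>I. \<forall>v\<in>I. R u v \<longleftrightarrow> \<phi> u \<subseteq> \<phi> v"
    and q: "bij_betw \<psi> J K" and qo: "\<forall>u\<in>J. \<forall>v\<in>J. R u v \<longleftrightarrow> \<psi> u \<subseteq> \<psi> v"
  shows "(\<exists>f. bij_betw f I J \<and> (\<forall>x\<in>I. \<forall>y\<in>I. R x y \<longleftrightarrow> R (f x) (f y))) \<longleftrightarrow> liso L K"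
proof
  assume "\<exists>f. bij_betw f I J \<and> (\<forall>x\<in>I. \<forall>y\<in>I. R x y \<longleftrightarrow> R (f x) (f y))"
  then obtain f where f: "bij_betw f I J" "\<forall>x\<in>I. \<forall>y\<in>I. R x y \<longleftrightarrow> R (f x) (f y)" by blast
  let ?pi = "inv_into I \<phi>"
  have pi: "bij_betw ?pi L I" using p by (rule bij_betw_inv_into)
  let ?h = "\<psi> \<circ> (f \<circ> ?pi)"
  have "bij_betw ?h L K" using bij_betw_trans[OF bij_betw_trans[OF pi f(1)] q] .
  moreover have "\<forall>a\<in>L. \<forall>b\<in>L. a \<subseteq> b \<longleftrightarrow> ?h a \<subseteq> ?h b"
  proof (intro ballI)
    fix a b assume a: "a \<in> L" and b: "b \<in> L"
    have ai: "?pi a \<in> I" "\<phi> (?pi a) = a" using a p pi by (auto simp: bij_betw_def f_inv_into_f)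
    have bi: "?pi b \<in> I" "\<phi> (?pi b) = b" using b p pi by (auto simp: bij_betw_def f_inv_into_f)
    have fJ: "f (?pi a) \<in> J" "f (?pi b) \<in> J" using f(1) ai bi by (auto simp: bij_betw_def)
    have "a \<subseteq> b \<longleftrightarrow> R (?pi a) (?pi b)" using po ai bi by metis
    also have "\<dots> \<longleftrightarrow> R (f (?pi a)) (f (?pi b))" using f(2) ai bi by blast
    also have "\<dots> \<longleftrightarrow> ?h a \<subseteq> ?h b" using qo fJ by simp
    finally show "a \<subseteq> b \<longleftrightarrow> ?h a \<subseteq> ?h b" .
  qed
  ultimately show "liso L K" unfolding liso_def by blast
next
  assume "liso L K"
  then obtain h where h: "bij_betw h L K" "\<forall>a\<in>L. \<forall>b\<in>L. a \<subseteq> b \<longleftrightarrow> h a \<subseteq> h b"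
    unfolding liso_def by blast
  let ?qi = "inv_into J \<psi>"
  have qi: "bij_betw ?qi K J" using q by (rule bij_betw_inv_into)
  let ?f = "?qi \<circ> (h \<circ> \<phi>)"
  have "bij_betw ?f I J" using bij_betw_trans[OF bij_betw_trans[OF p h(1)] qi] .
  moreover have "\<forall>x\<in>I. \<forall>y\<in>I. R x y \<longleftrightarrow> R (?f x) (?f y)"
  proof (intro ballI)
    fix x y assume x: "x \<in> I" and y: "y \<in> I"
    have pL: "\<phi> x \<in> L" "\<phi> y \<in> L" using p x y by (auto simp: bij_betw_def)
    have hK: "h (\<phi> x) \<in> K" "h (\<phi> y) \<in> K" using h(1) pL by (auto simp: bij_betw_def)
    have qJ: "?qi (h (\<phi> x)) \<in> J" "?qi (h (\<phi> y)) \<in> J" using qi hK by (auto simp: bij_betw_def)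
    have qq: "\<psi> (?qi (h (\<phi> x))) = h (\<phi> x)" "\<psi> (?qi (h (\<phi> y))) = h (\<phi> y)"
      using q hK by (auto simp: bij_betw_def f_inv_into_f)
    have "R x y \<longleftrightarrow> \<phi> x \<subseteq> \<phi> y" using po x y by blast
    also have "\<dots> \<longleftrightarrow> h (\<phi> x) \<subseteq> h (\<phi> y)" using h(2) pL by blast
    also have "\<dots> \<longleftrightarrow> R (?f x) (?f y)" using qo qJ qq by simp
    finally show "R x y \<longleftrightarrow> R (?f x) (?f y)" .
  qed
  ultimately show "\<exists>f. bij_betw f I J \<and> (\<forall>x\<in>I. \<forall>y\<in>I. R x y \<longleftrightarrow> R (f x) (f y))" by blast
qed

theorem theorem3p11:
  fixes G :: "'a set" and ar :: "'a \<Rightarrow> nat" and s t s' t' :: "'a gtree"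
  assumes "alphabet G ar"
    and "gtree_wf G ar s" and "gtree_wf G ar t" and "gtree_wf G ar s'" and "gtree_wf G ar t'"
    and "gprefix G ar s t" and "gprefix G ar s' t'"
  shows "interval_iso G ar (ginterval G ar s t) (ginterval G ar s' t') \<longleftrightarrow>
         sh_diamond (tdiff G ar t s) = sh_diamond (tdiff G ar t' s')"
proof -
  have st: "pre s t" using gprefix_iff[OF assms(2)] assms(6) by blast
  have st': "pre s' t'" using gprefix_iff[OF assms(4)] assms(7) by blast
  have td: "tdiff G ar t s = diff s t" by (rule tdiff_eq[OF st assms(3)])
  have td': "tdiff G ar t' s' = diff s' t'" by (rule tdiff_eq[OF st' assms(5)])
  let ?Y = "X t - X s" and ?Y' = "X t' - X s'"
  have finY: "finite ?Y" "finite ?Y'" using finite_X by auto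
  note i1 = interval_down[OF assms(2,3) st] and i2 = interval_down[OF assms(4,5) st']
  have "interval_iso G ar (ginterval G ar s t) (ginterval G ar s' t') \<longleftrightarrow> liso (down ?Y) (down ?Y')"
    unfolding interval_iso_def by (rule transfer_iso[OF i1 i2])
  also have "\<dots> \<longleftrightarrow> piso ?Y ?Y'"
    using piso_of_liso[OF finY] liso_of_piso by blast
  also have "\<dots> \<longleftrightarrow> sh_diamond (diff s t) = sh_diamond (diff s' t')"
  proof
    let ?nl = "\<lambda>t. t \<noteq> Leaf"
    have p1: "piso ?Y (F (map X (diff s t)))" by (rule Y_piso[OF st])
    have p2: "piso ?Y' (F (map X (diff s' t')))" by (rule Y_piso[OF st'])
    {
      assume "piso ?Y ?Y'"
      then have "fsh ?Y = fsh ?Y'" using finY by (intro fsh_piso)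
      moreover have "fsh ?Y = fsh (F (map X (diff s t)))" using p1 finY by (intro fsh_piso)
      moreover have "fsh ?Y' = fsh (F (map X (diff s' t')))" using p2 finY by (intro fsh_piso)
      ultimately have "mset (map sh (filter ?nl (diff s t))) = mset (map sh (filter ?nl (diff s' t')))"
        by (simp add: fsh_F_diamond)
      then show "sh_diamond (diff s t) = sh_diamond (diff s' t')" by (simp add: sh_diamond_def)
    }
    {
      assume "sh_diamond (diff s t) = sh_diamond (diff s' t')"
      then have "mset (map sh (filter ?nl (diff s t))) = mset (map sh (filter ?nl (diff s' t')))"
        by (simp add: sh_diamond_def)
      then have "piso (F (map X (diff s t))) (F (map X (diff s' t')))" by (rule diamond_piso)
      then show "piso ?Y ?Y'" using p1 p2 by (meson piso_sym piso_trans)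
    }
  qed
  finally show ?thesis using td td' by simp
qed

end
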